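(* Fix $p\in(0,1)$, $q=1-p$, and let $T_{n,p}$ be the post-loss completion time of the careless coupon collector started from the empty collection. Then \[\log T_{n,p}=\frac{n(n+1)}{2}\log\frac1q+\log\frac{n^n}{n!}+\mathrm O_{\mathbb P}(1),\] equivalently $\log T_{n,p}=\frac{n(n+1)}{2}\log\frac{1}{1-p}+n-\frac12\log(2\pi n)+\mathrm O_{\mathbb P}(1)$.
   Context: Careless coupon collector (post-loss convention): $S_t\subseteq[n]$, $S_0=\emptyset$; in each round a type $J_t$ is drawn uniformly from $[n]$ independently, and then each coupon of $S_t\cup\{J_t\}$ is independently lost with probability $p$, the survivors forming $S_{t+1}$. $T_{n,p}=\inf\{t\ge0:S_t=[n]\}$. $\mathrm O_{\mathbb P}(1)$ denotes a sequence of random variables that is tight (bounded in probability). *)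

theory Defs
  imports "HOL-Probability.Probability"
begin

text \<open>Careless coupon collector with coupon types \<open>{..<n}\<close> (a relabelling of [n]).
  One round consists of a uniformly drawn type \<open>J\<close> and independent loss indicators
  (each \<open>True\<close> = lost, with probability \<open>p\<close>) for every coupon type.\<close>

definition round_pmf :: "nat \<Rightarrow> real \<Rightarrow> (nat \<times> (nat \<Rightarrow> bool)) pmf" where
  "round_pmf n p = pair_pmf (pmf_of_set {..<n}) (Pi_pmf {..<n} True (\<lambda>_. bernoulli_pmf p))"

definition rounds_space :: "nat \<Rightarrow> real \<Rightarrow> (nat \<times> (nat \<Rightarrow> bool)) stream measure" where
  "rounds_space n p = stream_space (measure_pmf (round_pmf n p))"

text \<open>Post-loss convention: \<open>S_{t+1}\<close> = survivors of \<open>S_t \<union> {J_t}\<close>.\<close>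
primrec coll_state :: "nat \<Rightarrow> (nat \<times> (nat \<Rightarrow> bool)) stream \<Rightarrow> nat set" where
  "coll_state 0 \<omega> = {}"
| "coll_state (Suc t) \<omega> =
     {i \<in> insert (fst (\<omega> !! t)) (coll_state t \<omega>). \<not> snd (\<omega> !! t) i}"

definition completion_time :: "nat \<Rightarrow> (nat \<times> (nat \<Rightarrow> bool)) stream \<Rightarrow> enat" where
  "completion_time n \<omega> = (INF t \<in> {t. coll_state t \<omega> = {..<n}}. enat t)"

end

theory Submission
  imports Defs
begin


definition dep :: "nat \<Rightarrow> ('a stream \<Rightarrow> 'b) \<Rightarrow> bool" where
  "dep k \<Phi> \<longleftrightarrow> (\<forall>\<omega> \<omega>'. (\<forall>r<k. \<omega> !! r = \<omega>' !! r) \<longrightarrow> \<Phi> \<omega> = \<Phi> \<omega>')"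

lemma space_SP[simp]: "space (stream_space (measure_pmf R)) = UNIV"
  by (simp add: space_stream_space streams_UNIV)

lemma prob_space_SP: "prob_space (stream_space (measure_pmf R))"
  by (rule prob_space.prob_space_stream_space) (rule prob_space_measure_pmf)

lemma SP_step:
  assumes "Measurable.pred (stream_space (measure_pmf R)) P"
  shows "ennreal (measure (stream_space (measure_pmf R)) {x. P x}) =
     (\<integral>\<^sup>+t. ennreal (measure (stream_space (measure_pmf R)) {x. P (t ## x)}) \<partial>measure_pmf R)"
proof -
  have "{x \<in> space (stream_space (measure_pmf R)). P x} \<in> sets (stream_space (measure_pmf R))"
    using assms by (simp add: pred_def)
  then have "{x. P x} \<in> sets (stream_space (measure_pmf R))" by simp
  then show ?thesis
    using prob_space.prob_stream_space[OF prob_space_measure_pmf[of R], where P=P] by simp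
qed

lemma pred_Stream_const:
  assumes "Measurable.pred (stream_space (measure_pmf R)) P"
  shows "Measurable.pred (stream_space (measure_pmf R)) (\<lambda>x. P (t ## x))"
  using assms by measurable

lemma cond_split:
  fixes R :: "'a pmf"
  assumes "dep k \<Phi>" "\<And>\<omega> \<omega>'. (\<forall>r<k. \<omega> !! r = \<omega>' !! r) \<Longrightarrow> \<Psi> \<omega> = \<Psi> \<omega>'"
    "\<And>\<omega>. \<Phi> \<omega> \<Longrightarrow> measure (stream_space (measure_pmf R)) {x. \<Psi> \<omega> x} = c"
    "Measurable.pred (stream_space (measure_pmf R)) \<Phi>"
    "Measurable.pred (stream_space (measure_pmf R)) (\<lambda>\<omega>. \<Psi> \<omega> (sdrop k \<omega>))"
    "\<And>\<omega>. Measurable.pred (stream_space (measure_pmf R)) (\<Psi> \<omega>)"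
    "c \<ge> 0"
  shows "measure (stream_space (measure_pmf R)) {\<omega>. \<Phi> \<omega> \<and> \<Psi> \<omega> (sdrop k \<omega>)}
       = c * measure (stream_space (measure_pmf R)) {\<omega>. \<Phi> \<omega>}"
  using assms
proof (induction k arbitrary: \<Phi> \<Psi>)
  case 0
  interpret S: prob_space "stream_space (measure_pmf R)" by (rule prob_space_SP)
  fix \<omega>0
  have c1: "\<Phi> \<omega> = \<Phi> \<omega>0" for \<omega> using 0(1) by (auto simp: dep_def)
  have c2: "\<Psi> \<omega> = \<Psi> \<omega>0" for \<omega> using 0(2) by auto
  show ?case
  proof (cases "\<Phi> \<omega>0")
    case True
    have "{\<omega>. \<Phi> \<omega> \<and> \<Psi> \<omega> (sdrop 0 \<omega>)} = {x. \<Psi> \<omega>0 x}" "{\<omega>. \<Phi> \<omega>} = UNIV"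
      using c1 c2 True by (auto, metis, metis)
    then show ?thesis using 0(3)[of \<omega>0] True S.prob_space by simp
  next
    case False
    then show ?thesis using c1 by simp
  qed
next
  case (Suc k)
  let ?S = "stream_space (measure_pmf R)"
  have "ennreal (measure ?S {\<omega>. \<Phi> \<omega> \<and> \<Psi> \<omega> (sdrop (Suc k) \<omega>)}) =
     (\<integral>\<^sup>+t. ennreal (measure ?S {x. \<Phi> (t ## x) \<and> \<Psi> (t ## x) (sdrop k x)}) \<partial>measure_pmf R)"
    by (subst SP_step) (use Suc.prems in auto)
  also have "\<dots> = (\<integral>\<^sup>+t. ennreal (c * measure ?S {x. \<Phi> (t ## x)}) \<partial>measure_pmf R)"
  proof (rule nn_integral_cong)
    fix t
    have "measure ?S {x. \<Phi> (t ## x) \<and> \<Psi> (t ## x) (sdrop k x)} = c * measure ?S {x. \<Phi> (t ## x)}"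
    proof (rule Suc.IH)
      show "dep k (\<lambda>x. \<Phi> (t ## x))" using Suc.prems(1) unfolding dep_def
        by (metis Stream_snth Suc_less_eq nat.case nat.exhaust)
      show "\<Psi> (t ## \<omega>) = \<Psi> (t ## \<omega>')" if "\<forall>r<k. \<omega> !! r = \<omega>' !! r" for \<omega> \<omega>'
        using Suc.prems(2) that by (metis Stream_snth Suc_less_eq nat.case nat.exhaust)
      show "measure ?S {x. \<Psi> (t ## \<omega>) x} = c" if "\<Phi> (t ## \<omega>)" for \<omega> using Suc.prems(3) that by blast
      show "Measurable.pred ?S (\<lambda>x. \<Phi> (t ## x))" using Suc.prems(4) by (rule pred_Stream_const)
      show "Measurable.pred ?S (\<lambda>x. \<Psi> (t ## x) (sdrop k x))"
        using pred_Stream_const[OF Suc.prems(5), of t] by simp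
      show "Measurable.pred ?S (\<Psi> (t ## \<omega>))" for \<omega> by (rule Suc.prems(6))
    qed (use Suc.prems in auto)
    then show "ennreal (measure ?S {x. \<Phi> (t ## x) \<and> \<Psi> (t ## x) (sdrop k x)}) = ennreal (c * measure ?S {x. \<Phi> (t ## x)})"
      by simp
  qed
  also have "\<dots> = ennreal c * (\<integral>\<^sup>+t. ennreal (measure ?S {x. \<Phi> (t ## x)}) \<partial>measure_pmf R)"
    using Suc.prems(7) by (subst nn_integral_cmult[symmetric]) (auto simp: ennreal_mult)
  also have "\<dots> = ennreal c * ennreal (measure ?S {x. \<Phi> x})"
    by (subst SP_step[OF Suc.prems(4)]) simp
  also have "\<dots> = ennreal (c * measure ?S {x. \<Phi> x})" using Suc.prems(7) by (simp add: ennreal_mult)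
  finally show ?case by (simp add: Suc.prems(7))
qed



lemma pred_snth[measurable]: "Measurable.pred (stream_space (measure_pmf R)) (\<lambda>\<omega>. Q (\<omega> !! r))"
  by (rule measurable_compose[OF measurable_snth]) simp

lemma nat_snth[measurable]: "(\<lambda>\<omega>. (g (\<omega> !! r))::nat) \<in> measurable (stream_space (measure_pmf R)) (count_space UNIV)"
  by (rule measurable_compose[OF measurable_snth]) simp

lemma pred_snth2[measurable]:
  "Measurable.pred (stream_space (measure_pmf R)) (\<lambda>\<omega>. Q (\<omega> !! r) ((g (\<omega> !! i))::nat))"
proof -
  have "(\<lambda>\<omega>. Q (\<omega> !! r) (g (\<omega> !! i))) = (\<lambda>\<omega>. \<exists>a::nat. g (\<omega> !! i) = a \<and> Q (\<omega> !! r) a)" by auto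
  moreover have "Measurable.pred (stream_space (measure_pmf R)) (\<lambda>\<omega>. \<exists>a::nat. g (\<omega> !! i) = a \<and> Q (\<omega> !! r) a)"
    by measurable
  ultimately show ?thesis by simp
qed

lemma pred_shd[measurable]: "Measurable.pred (stream_space (measure_pmf R)) (\<lambda>\<omega>. Q (shd \<omega>))"
  using pred_snth[of Q 0] by simp

lemma pred_sdrop:
  assumes "Measurable.pred (stream_space (measure_pmf R)) P"
  shows "Measurable.pred (stream_space (measure_pmf R)) (\<lambda>\<omega>. P (sdrop k \<omega>))"
  using assms by measurable

lemma split_indep:
  assumes "dep k \<Phi>" "Measurable.pred (stream_space (measure_pmf R)) \<Phi>"
    "Measurable.pred (stream_space (measure_pmf R)) \<Psi>"
  shows "measure (stream_space (measure_pmf R)) {\<omega>. \<Phi> \<omega> \<and> \<Psi> (sdrop k \<omega>)}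
       = measure (stream_space (measure_pmf R)) {\<omega>. \<Psi> \<omega>} * measure (stream_space (measure_pmf R)) {\<omega>. \<Phi> \<omega>}"
  by (rule cond_split[where \<Psi>="\<lambda>_. \<Psi>"]) (use assms in \<open>auto intro: pred_sdrop\<close>)

lemma shift_inv:
  assumes "Measurable.pred (stream_space (measure_pmf R)) \<Psi>"
  shows "measure (stream_space (measure_pmf R)) {\<omega>. \<Psi> (sdrop k \<omega>)}
       = measure (stream_space (measure_pmf R)) {\<omega>. \<Psi> \<omega>}"
proof -
  interpret S: prob_space "stream_space (measure_pmf R)" by (rule prob_space_SP)
  have "dep k (\<lambda>_. True)" by (simp add: dep_def)
  from split_indep[OF this _ assms] show ?thesis using S.prob_space by simp
qed

lemma prob_shd:
  "measure (stream_space (measure_pmf R)) {\<omega>. shd \<omega> \<in> A} = measure (measure_pmf R) A"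
proof -
  interpret S: prob_space "stream_space (measure_pmf R)" by (rule prob_space_SP)
  have "ennreal (measure (stream_space (measure_pmf R)) {\<omega>. shd \<omega> \<in> A}) =
     (\<integral>\<^sup>+t. ennreal (measure (stream_space (measure_pmf R)) {x. shd (t ## x) \<in> A}) \<partial>measure_pmf R)"
    by (rule SP_step) (rule pred_shd)
  also have "\<dots> = (\<integral>\<^sup>+t. indicator A t \<partial>measure_pmf R)"
    using S.prob_space by (intro nn_integral_cong) (auto split: split_indicator)
  also have "\<dots> = emeasure (measure_pmf R) A" by simp
  finally show ?thesis by (simp add: measure_pmf.emeasure_eq_measure)
qed

lemma step_prob:
  assumes "dep k \<Phi>" "dep k C" "\<And>\<omega>. \<Phi> \<omega> \<Longrightarrow> measure (measure_pmf R) (C \<omega>) = c"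
    "Measurable.pred (stream_space (measure_pmf R)) \<Phi>"
    "Measurable.pred (stream_space (measure_pmf R)) (\<lambda>\<omega>. \<omega> !! k \<in> C \<omega>)" "c \<ge> 0"
  shows "measure (stream_space (measure_pmf R)) {\<omega>. \<Phi> \<omega> \<and> \<omega> !! k \<in> C \<omega>}
       = c * measure (stream_space (measure_pmf R)) {\<omega>. \<Phi> \<omega>}"
proof -
  have "measure (stream_space (measure_pmf R)) {\<omega>. \<Phi> \<omega> \<and> shd (sdrop k \<omega>) \<in> C \<omega>}
       = c * measure (stream_space (measure_pmf R)) {\<omega>. \<Phi> \<omega>}"
  proof (rule cond_split[where \<Psi>="\<lambda>\<omega> x. shd x \<in> C \<omega>"])
    show "(\<lambda>x. shd x \<in> C \<omega>) = (\<lambda>x. shd x \<in> C \<omega>')" if "\<forall>r<k. \<omega> !! r = \<omega>' !! r" for \<omega> \<omega>'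
      using assms(2) that by (auto simp: dep_def)
  qed (use assms prob_shd pred_shd in auto)
  then show ?thesis by simp
qed



abbreviation PiB :: "nat \<Rightarrow> real \<Rightarrow> (nat \<Rightarrow> bool) pmf" where
  "PiB n p \<equiv> Pi_pmf {..<n} True (\<lambda>_. bernoulli_pmf p)"

lemma round_prob:
  assumes "n > 0"
  shows "measure (round_pmf n p) {x. snd x \<in> Q (fst x)} = (\<Sum>a<n. measure (PiB n p) (Q a)) / n"
proof -
  have "emeasure (round_pmf n p) {x. snd x \<in> Q (fst x)} =
      (\<integral>\<^sup>+x. indicator {x. snd x \<in> Q (fst x)} x \<partial>pair_pmf (pmf_of_set {..<n}) (PiB n p))"
    unfolding round_pmf_def by (subst nn_integral_indicator) auto
  also have "\<dots> = (\<integral>\<^sup>+a. \<integral>\<^sup>+b. indicator {x. snd x \<in> Q (fst x)} (a, b) \<partial>PiB n p \<partial>pmf_of_set {..<n})"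
    by (rule nn_integral_pair_pmf')
  also have "\<dots> = (\<integral>\<^sup>+a. emeasure (PiB n p) (Q a) \<partial>pmf_of_set {..<n})"
    by (intro nn_integral_cong) (simp add: indicator_def flip: nn_integral_indicator)
  also have "\<dots> = (\<Sum>a<n. emeasure (PiB n p) (Q a)) / n"
    using assms by (subst nn_integral_pmf_of_set) auto
  also have "\<dots> = ennreal ((\<Sum>a<n. measure (PiB n p) (Q a)) / n)"
    using assms by (simp add: measure_pmf.emeasure_eq_measure ennreal_of_nat_eq_real_of_nat sum_ennreal)
       (rule divide_ennreal, auto intro: sum_nonneg)
  finally show ?thesis
    unfolding measure_pmf.emeasure_eq_measure
    by (subst (asm) ennreal_inj) (auto intro!: divide_nonneg_nonneg sum_nonneg)
qed

lemma Pi_surv: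
  assumes "0 \<le> p" "p \<le> 1" "B \<subseteq> {..<n}"
  shows "measure (PiB n p) {f. \<forall>i\<in>B. \<not> f i} = (1 - p) ^ card B"
proof -
  have "{f. \<forall>i\<in>B. \<not> f i} = Pi {..<n} (\<lambda>i. if i \<in> B then {False} else UNIV)"
    using assms(3) by (auto simp: Pi_def)
  then have "measure (PiB n p) {f. \<forall>i\<in>B. \<not> f i} = (\<Prod>i<n. measure (bernoulli_pmf p) (if i \<in> B then {False} else UNIV))"
    by (simp add: measure_Pi_pmf_Pi)
  also have "\<dots> = (\<Prod>i<n. if i \<in> B then 1 - p else 1)"
    using assms by (intro prod.cong) (auto simp: measure_pmf_single)
  also have "\<dots> = (1 - p) ^ card B"
    using assms(3) by (simp add: prod.If_cases Int_absorb1)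
  finally show ?thesis .
qed

lemma Pi_lost:
  assumes "0 \<le> p" "p \<le> 1" "a < n"
  shows "measure (PiB n p) {f. f a} = p"
proof -
  have "{f. f a} = Pi {..<n} (\<lambda>i. if i = a then {True} else UNIV)"
    using assms(3) by (auto simp: Pi_def)
  then have "measure (PiB n p) {f. f a} = (\<Prod>i<n. measure (bernoulli_pmf p) (if i = a then {True} else UNIV))"
    by (simp add: measure_Pi_pmf_Pi)
  also have "\<dots> = (\<Prod>i<n. if i = a then p else 1)"
    using assms by (intro prod.cong) (auto simp: measure_pmf_single)
  also have "\<dots> = p"
    using assms(3) by simp
  finally show ?thesis .
qed

lemma set_round:
  assumes "x \<in> set_pmf (round_pmf n p)" "n > 0"
  shows "fst x < n" "\<And>i. n \<le> i \<Longrightarrow> snd x i"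
proof -
  have "set_pmf (pmf_of_set {..<n}) = {..<n}" using assms(2) by (intro set_pmf_of_set) auto
  then show "fst x < n" "\<And>i. n \<le> i \<Longrightarrow> snd x i"
    using assms set_Pi_pmf_subset[of "{..<n}" True "\<lambda>_. bernoulli_pmf p"]
    by (auto simp: round_pmf_def)
qed



lemma mem_coll_Suc: "i \<in> coll_state (Suc t) \<omega> \<longleftrightarrow> (i = fst (\<omega> !! t) \<or> i \<in> coll_state t \<omega>) \<and> \<not> snd (\<omega> !! t) i"
  by auto

lemma pred_coll[measurable]: "Measurable.pred (stream_space (measure_pmf R)) (\<lambda>\<omega>. i \<in> coll_state t \<omega>)"
proof (induction t arbitrary: i)
  case 0 then show ?case by simp
next
  case (Suc t)
  have "Measurable.pred (stream_space (measure_pmf R)) (\<lambda>\<omega>. (i = fst (\<omega> !! t) \<or> i \<in> coll_state t \<omega>) \<and> \<not> snd (\<omega> !! t) i)"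
    using Suc.IH by measurable
  then show ?case by (simp only: mem_coll_Suc)
qed

lemma pred_coll_sub: "finite B \<Longrightarrow> Measurable.pred (stream_space (measure_pmf R)) (\<lambda>\<omega>. B \<subseteq> coll_state t \<omega>)"
  unfolding subset_eq by measurable

lemma pred_sets: "Measurable.pred (stream_space (measure_pmf R)) P \<Longrightarrow> {\<omega>. P \<omega>} \<in> sets (stream_space (measure_pmf R))"
  by (simp add: pred_def)

lemma pred_and: "Measurable.pred M P \<Longrightarrow> Measurable.pred M Q \<Longrightarrow> Measurable.pred M (\<lambda>x. P x \<and> Q x)"
  by measurable

lemma dep_coll: "dep t (coll_state t)"
  unfolding dep_def
proof (induction t)
  case 0 then show ?case by simp
next
  case (Suc t)
  show ?case
  proof (intro allI impI)
    fix \<omega> \<omega>' :: "(nat \<times> (nat \<Rightarrow> bool)) stream"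
    assume a: "\<forall>r<Suc t. \<omega> !! r = \<omega>' !! r"
    then have "coll_state t \<omega> = coll_state t \<omega>'" using Suc by auto
    moreover have "\<omega> !! t = \<omega>' !! t" using a by auto
    ultimately show "coll_state (Suc t) \<omega> = coll_state (Suc t) \<omega>'" by simp
  qed
qed

lemma dep_sub: "dep t (\<lambda>\<omega>. B \<subseteq> coll_state t \<omega>)"
  using dep_coll[of t] unfolding dep_def by (metis (mono_tags))

definition bb :: "nat \<Rightarrow> real \<Rightarrow> nat \<Rightarrow> real" where
  "bb n p k = (\<Prod>j<k. (real (j+1) / n) * (1-p)^(j+1) / (1 - (1-p)^(j+1)))"

lemma bb_nonneg: "0 < p \<Longrightarrow> p < 1 \<Longrightarrow> 0 \<le> bb n p k"
  unfolding bb_def by (intro prod_nonneg) (auto intro!: divide_nonneg_nonneg mult_nonneg_nonneg power_le_one mult_le_one)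

lemma bb_Suc: "bb n p (Suc k) = bb n p k * ((real (k+1) / n) * (1-p)^(k+1) / (1 - (1-p)^(k+1)))"
  unfolding bb_def by simp

lemma lower_main:
  assumes p: "0 < p" "p < 1" and n: "n > 0"
  shows "\<forall>B. B \<subseteq> {..<n} \<longrightarrow> measure (rounds_space n p) {\<omega>. B \<subseteq> coll_state t \<omega>} \<le> bb n p (card B)"
proof (induction t)
  interpret S: prob_space "rounds_space n p" unfolding rounds_space_def by (rule prob_space_SP)
  case 0
  show ?case
  proof (intro allI impI)
    fix B :: "nat set" assume "B \<subseteq> {..<n}"
    show "measure (rounds_space n p) {\<omega>. B \<subseteq> coll_state 0 \<omega>} \<le> bb n p (card B)"
    proof (cases "B = {}")
      case True then show ?thesis by (simp add: bb_def)
    next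
      case False then show ?thesis using bb_nonneg[OF p] by simp
    qed
  qed
next
  interpret S: prob_space "rounds_space n p" unfolding rounds_space_def by (rule prob_space_SP)
  case (Suc t)
  show ?case
  proof (intro allI impI)
    fix B :: "nat set" assume B: "B \<subseteq> {..<n}"
    then have finB: "finite B" using finite_subset by blast
    let ?S = "rounds_space n p"
    let ?P = "\<lambda>X. measure ?S {\<omega>. X \<omega>}"
    define K where "K = card B"
    define Sv where "Sv = {x::nat \<times> (nat \<Rightarrow> bool). \<forall>i\<in>B. \<not> snd x i}"
    define Dr where "Dr = (\<lambda>a. {x::nat \<times> (nat \<Rightarrow> bool). fst x = a \<and> (\<forall>i\<in>B. \<not> snd x i)})"
    show "?P (\<lambda>\<omega>. B \<subseteq> coll_state (Suc t) \<omega>) \<le> bb n p (card B)"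
    proof (cases "B = {}")
      case True then show ?thesis by (simp add: bb_def)
    next
      case False
      then have K1: "K \<ge> 1" using finB K_def by (simp add: Suc_leI card_gt_0_iff)
      have PS: "measure (PiB n p) {f. \<forall>i\<in>B. \<not> f i} = (1-p)^K"
        using Pi_surv[of p B n] p B K_def by auto
      have RSv: "measure (round_pmf n p) Sv = (1-p)^K"
      proof -
        have "measure (round_pmf n p) Sv = measure (round_pmf n p) {x. snd x \<in> (\<lambda>_. {f. \<forall>i\<in>B. \<not> f i}) (fst x)}"
          by (simp add: Sv_def)
        also have "\<dots> = (1-p)^K" using n PS by (subst round_prob) auto
        finally show ?thesis .
      qed
      have RDr: "measure (round_pmf n p) (Dr a) = (1-p)^K / n" if "a \<in> B" for a
      proof -
        have "measure (round_pmf n p) (Dr a) = measure (round_pmf n p) {x. snd x \<in> (\<lambda>a'. if a' = a then {f. \<forall>i\<in>B. \<not> f i} else {}) (fst x)}"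
          by (rule arg_cong[where f="measure _"]) (auto simp: Dr_def)
        also have "\<dots> = (\<Sum>a'<n. measure (PiB n p) (if a' = a then {f. \<forall>i\<in>B. \<not> f i} else {})) / n"
          using n by (subst round_prob) simp_all
        also have "(\<Sum>a'<n. measure (PiB n p) (if a' = a then {f. \<forall>i\<in>B. \<not> f i} else {})) = (\<Sum>a'<n. if a' = a then (1-p)^K else 0)"
          by (rule sum.cong) (auto simp: PS)
        also have "(\<Sum>a'<n. if a' = a then (1-p)^K else (0::real)) = (1-p)^K"
          using that B by auto
        finally show ?thesis .
      qed
      have sub: "{\<omega>. B \<subseteq> coll_state (Suc t) \<omega>} \<subseteq>
          {\<omega>. B \<subseteq> coll_state t \<omega> \<and> \<omega> !! t \<in> Sv} \<union> (\<Union>a\<in>B. {\<omega>. B - {a} \<subseteq> coll_state t \<omega> \<and> \<omega> !! t \<in> Dr a})"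
        by (auto simp: Sv_def Dr_def)
      have m1: "{\<omega>. B \<subseteq> coll_state t \<omega> \<and> \<omega> !! t \<in> Sv} \<in> sets ?S"
        unfolding rounds_space_def using pred_coll_sub[OF finB] by (intro pred_sets pred_and pred_snth)
      have m2: "{\<omega>. B - {a} \<subseteq> coll_state t \<omega> \<and> \<omega> !! t \<in> Dr a} \<in> sets ?S" for a
        unfolding rounds_space_def using pred_coll_sub[of "B - {a}"] finB by (intro pred_sets pred_and pred_snth) auto
      have e1: "?P (\<lambda>\<omega>. B \<subseteq> coll_state t \<omega> \<and> \<omega> !! t \<in> Sv) = (1-p)^K * ?P (\<lambda>\<omega>. B \<subseteq> coll_state t \<omega>)"
        unfolding rounds_space_def
        by (rule step_prob[where C="\<lambda>_. Sv"]) (use RSv dep_sub pred_coll_sub[OF finB] p in \<open>auto simp: dep_def\<close>)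
      have e2: "?P (\<lambda>\<omega>. B - {a} \<subseteq> coll_state t \<omega> \<and> \<omega> !! t \<in> Dr a) = (1-p)^K / n * ?P (\<lambda>\<omega>. B - {a} \<subseteq> coll_state t \<omega>)"
        if "a \<in> B" for a
        unfolding rounds_space_def
        by (rule step_prob[where C="\<lambda>_. Dr a"]) (use RDr[OF that] dep_sub pred_coll_sub[of "B - {a}"] finB p in \<open>auto simp: dep_def\<close>)
      have "?P (\<lambda>\<omega>. B \<subseteq> coll_state (Suc t) \<omega>) \<le> measure ?S ({\<omega>. B \<subseteq> coll_state t \<omega> \<and> \<omega> !! t \<in> Sv} \<union> (\<Union>a\<in>B. {\<omega>. B - {a} \<subseteq> coll_state t \<omega> \<and> \<omega> !! t \<in> Dr a}))"
        using sub m1 m2 finB by (intro S.finite_measure_mono) auto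
      also have "\<dots> \<le> ?P (\<lambda>\<omega>. B \<subseteq> coll_state t \<omega> \<and> \<omega> !! t \<in> Sv) + measure ?S (\<Union>a\<in>B. {\<omega>. B - {a} \<subseteq> coll_state t \<omega> \<and> \<omega> !! t \<in> Dr a})"
        using m1 m2 finB by (intro measure_subadditive S.emeasure_finite) auto
      also have "measure ?S (\<Union>a\<in>B. {\<omega>. B - {a} \<subseteq> coll_state t \<omega> \<and> \<omega> !! t \<in> Dr a}) \<le> (\<Sum>a\<in>B. ?P (\<lambda>\<omega>. B - {a} \<subseteq> coll_state t \<omega> \<and> \<omega> !! t \<in> Dr a))"
        using m2 finB by (intro S.finite_measure_subadditive_finite) auto
      also have "(\<Sum>a\<in>B. ?P (\<lambda>\<omega>. B - {a} \<subseteq> coll_state t \<omega> \<and> \<omega> !! t \<in> Dr a)) \<le> (\<Sum>a\<in>B. (1-p)^K / n * bb n p (K - 1))"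
      proof (rule sum_mono)
        fix a assume a: "a \<in> B"
        have "card (B - {a}) = K - 1" using a finB K_def by simp
        moreover have "B - {a} \<subseteq> {..<n}" using B by auto
        ultimately have "?P (\<lambda>\<omega>. B - {a} \<subseteq> coll_state t \<omega>) \<le> bb n p (K - 1)" using Suc.IH by metis
        then show "?P (\<lambda>\<omega>. B - {a} \<subseteq> coll_state t \<omega> \<and> \<omega> !! t \<in> Dr a) \<le> (1-p)^K / n * bb n p (K - 1)"
          using e2[OF a] p by (auto intro!: mult_left_mono divide_right_mono)
      qed
      also have "?P (\<lambda>\<omega>. B \<subseteq> coll_state t \<omega> \<and> \<omega> !! t \<in> Sv) \<le> (1-p)^K * bb n p K"
        using e1 Suc.IH B p K_def by (auto intro!: mult_left_mono)
      finally have "?P (\<lambda>\<omega>. B \<subseteq> coll_state (Suc t) \<omega>) \<le> (1-p)^K * bb n p K + K * ((1-p)^K / n * bb n p (K - 1))"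
        by (simp add: K_def)
      also have "\<dots> = bb n p K"
      proof -
        obtain k where k: "K = Suc k" using K1 by (cases K) auto
        have q1: "(1-p)^(k+1) < 1" using p by (intro power_less_one_iff[THEN iffD2]) auto
        have alg: "Q * (b * (K / N * Q / (1 - Q))) + K * (Q / N * b) = b * (K / N * Q / (1 - Q))"
          if "Q < 1" "N > 0" for Q b K N :: real
          using that by (simp add: field_simps)
        show ?thesis unfolding k bb_Suc using alg[OF q1, of n "bb n p k" "real (k+1)"] n
          by simp
      qed
      finally show ?thesis by (simp add: K_def)
    qed
  qed
qed



lemma (in finite_measure) bonf:
  assumes "\<And>i. A i \<in> sets M"
  shows "measure M (\<Union>i<(m::nat). A i) \<ge> (\<Sum>i<m. measure M (A i)) - (\<Sum>i<m. \<Sum>j<i. measure M (A j \<inter> A i))"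
proof (induction m)
  case 0 then show ?case by simp
next
  case (Suc m)
  let ?U = "\<Union>i<m. A i"
  have U: "?U \<in> sets M" using assms by auto
  have "measure M (\<Union>i<Suc m. A i) = measure M (?U \<union> A m)"
    by (simp add: lessThan_Suc Un_commute)
  also have "\<dots> = measure M ?U + measure M (A m) - measure M (A m \<inter> ?U)"
    using U assms finite_measure_Union' finite_measure_Diff' by simp
  finally have e: "measure M (\<Union>i<Suc m. A i) = measure M ?U + measure M (A m) - measure M (A m \<inter> ?U)" .
  have le: "measure M (A m \<inter> ?U) \<le> (\<Sum>j<m. measure M (A j \<inter> A m))"
  proof -
    have "A m \<inter> ?U = (\<Union>j<m. A j \<inter> A m)" by auto
    also have "measure M \<dots> \<le> (\<Sum>j<m. measure M (A j \<inter> A m))"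
      using assms by (intro finite_measure_subadditive_finite) auto
    finally show ?thesis .
  qed
  show ?case using Suc.IH e le by simp
qed

definition win :: "nat \<Rightarrow> real \<Rightarrow> nat \<Rightarrow> (nat \<times> (nat \<Rightarrow> bool)) stream \<Rightarrow> bool" where
  "win n p k \<omega> \<longleftrightarrow> (\<forall>i<k. \<omega> !! i \<in> set_pmf (round_pmf n p)) \<and>
     (\<forall>i<k. \<forall>j<k. i \<noteq> j \<longrightarrow> fst (\<omega> !! i) \<noteq> fst (\<omega> !! j)) \<and>
     (\<forall>i<k. \<forall>r<k. i \<le> r \<longrightarrow> \<not> snd (\<omega> !! r) (fst (\<omega> !! i)))"

lemma pred_win: "Measurable.pred (stream_space (measure_pmf R)) (win n p k)"
  unfolding win_def
  by (intro pred_intros_logic pred_intros_countable allI pred_snth measurable_const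
     pred_snth2[where Q="\<lambda>x a. a = fst x" and g=fst] pred_snth2[where Q="\<lambda>x a. snd x a" and g=fst])

lemma win_mono: "k' \<le> k \<Longrightarrow> win n p k \<omega> \<Longrightarrow> win n p k' \<omega>"
  unfolding win_def by auto

lemma win_agree: "(\<forall>r<t+k. \<omega> !! r = \<omega>' !! r) \<Longrightarrow> win n p k (sdrop t \<omega>) = win n p k (sdrop t \<omega>')"
  unfolding win_def sdrop_snth by auto

lemma win_Suc:
  "win n p (Suc k) \<omega> \<longleftrightarrow> win n p k \<omega> \<and> \<omega> !! k \<in>
     {x \<in> set_pmf (round_pmf n p). fst x \<notin> (\<lambda>i. fst (\<omega> !! i)) ` {..<k} \<and>
        (\<forall>i<k. \<not> snd x (fst (\<omega> !! i))) \<and> \<not> snd x (fst x)}"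
proof
  assume w: "win n p (Suc k) \<omega>"
  then have "win n p k \<omega>" by (rule win_mono[rotated]) simp
  moreover have "\<omega> !! k \<in> set_pmf (round_pmf n p)" using w unfolding win_def by simp
  moreover have "fst (\<omega> !! k) \<notin> (\<lambda>i. fst (\<omega> !! i)) ` {..<k}"
  proof
    assume "fst (\<omega> !! k) \<in> (\<lambda>i. fst (\<omega> !! i)) ` {..<k}"
    then obtain i where "i < k" "fst (\<omega> !! k) = fst (\<omega> !! i)" by auto
    then show False using w unfolding win_def by (metis less_Suc_eq less_irrefl)
  qed
  moreover have "\<forall>i<k. \<not> snd (\<omega> !! k) (fst (\<omega> !! i))"
  proof (intro allI impI)
    fix i assume "i < k"
    then show "\<not> snd (\<omega> !! k) (fst (\<omega> !! i))" using w unfolding win_def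
      by (meson less_Suc_eq less_imp_le_nat lessI)
  qed
  moreover have "\<not> snd (\<omega> !! k) (fst (\<omega> !! k))" using w unfolding win_def by blast
  ultimately show "win n p k \<omega> \<and> \<omega> !! k \<in> {x \<in> set_pmf (round_pmf n p). fst x \<notin> (\<lambda>i. fst (\<omega> !! i)) ` {..<k} \<and>
        (\<forall>i<k. \<not> snd x (fst (\<omega> !! i))) \<and> \<not> snd x (fst x)}" by simp
next
  assume a: "win n p k \<omega> \<and> \<omega> !! k \<in> {x \<in> set_pmf (round_pmf n p). fst x \<notin> (\<lambda>i. fst (\<omega> !! i)) ` {..<k} \<and>
        (\<forall>i<k. \<not> snd x (fst (\<omega> !! i))) \<and> \<not> snd x (fst x)}"
  then have w: "win n p k \<omega>" and m: "\<omega> !! k \<in> set_pmf (round_pmf n p)"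
    and d: "\<And>i. i < k \<Longrightarrow> fst (\<omega> !! k) \<noteq> fst (\<omega> !! i)"
    and s1: "\<And>i. i < k \<Longrightarrow> \<not> snd (\<omega> !! k) (fst (\<omega> !! i))"
    and s2: "\<not> snd (\<omega> !! k) (fst (\<omega> !! k))" by auto
  have A: "\<forall>i<Suc k. \<omega> !! i \<in> set_pmf (round_pmf n p)"
    using w m unfolding win_def by (auto simp: less_Suc_eq)
  have B: "\<forall>i<Suc k. \<forall>j<Suc k. i \<noteq> j \<longrightarrow> fst (\<omega> !! i) \<noteq> fst (\<omega> !! j)"
  proof (intro allI impI)
    fix i j assume "i < Suc k" "j < Suc k" "i \<noteq> j"
    then consider "i < k" "j < k" | "i = k" "j < k" | "i < k" "j = k" by (auto simp: less_Suc_eq)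
    then show "fst (\<omega> !! i) \<noteq> fst (\<omega> !! j)"
    proof cases
      case 1 then show ?thesis using w \<open>i \<noteq> j\<close> unfolding win_def by blast
    next
      case 2 then show ?thesis using d by auto
    next
      case 3 then show ?thesis using d by metis
    qed
  qed
  have C: "\<forall>i<Suc k. \<forall>r<Suc k. i \<le> r \<longrightarrow> \<not> snd (\<omega> !! r) (fst (\<omega> !! i))"
  proof (intro allI impI)
    fix i r assume "i < Suc k" "r < Suc k" "i \<le> r"
    then consider "i < k" "r < k" | "i < k" "r = k" | "i = k" "r = k" by (auto simp: less_Suc_eq)
    then show "\<not> snd (\<omega> !! r) (fst (\<omega> !! i))"
    proof cases
      case 1 then show ?thesis using w \<open>i \<le> r\<close> unfolding win_def by blast
    next
      case 2 then show ?thesis using s1 by auto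
    next
      case 3 then show ?thesis using s2 by auto
    qed
  qed
  show "win n p (Suc k) \<omega>" unfolding win_def using A B C by blast
qed



definition pix :: "nat \<Rightarrow> real \<Rightarrow> nat \<Rightarrow> real" where
  "pix n p k = (\<Prod>j<k. (real (n - j) / n * (1-p)^(j+1)))"

lemma dep_win: "dep k (win n p k)"
  unfolding dep_def using win_agree[of 0 k] by simp

lemma sum_if_card: "finite A \<Longrightarrow> (\<Sum>a\<in>A. if a \<in> E then 0 else c) = c * real (card (A - E))"
proof -
  assume "finite A"
  have "(\<Sum>a\<in>A. if a \<in> E then 0 else c) = (\<Sum>a\<in>A - E. c)"
    using \<open>finite A\<close> by (simp add: sum.If_cases Diff_eq)
  then show ?thesis by simp
qed

lemma prob_UNIV: "measure (rounds_space n p) UNIV = 1"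
proof -
  interpret S: prob_space "rounds_space n p" unfolding rounds_space_def by (rule prob_space_SP)
  have "space (rounds_space n p) = UNIV" by (simp add: rounds_space_def)
  then show ?thesis using S.prob_space by simp
qed

lemma win_prob:
  assumes p: "0 < p" "p < 1" and n: "n > 0"
  shows "k \<le> n \<Longrightarrow> measure (rounds_space n p) {\<omega>. win n p k \<omega>} = pix n p k"
proof (induction k)
  interpret S: prob_space "rounds_space n p" unfolding rounds_space_def by (rule prob_space_SP)
  case 0
  then show ?case by (simp add: win_def pix_def prob_UNIV)
next
  case (Suc k)
  define C where "C = (\<lambda>\<omega>::(nat \<times> (nat \<Rightarrow> bool)) stream. {x \<in> set_pmf (round_pmf n p). fst x \<notin> (\<lambda>i. fst (\<omega> !! i)) ` {..<k} \<and>
        (\<forall>i<k. \<not> snd x (fst (\<omega> !! i))) \<and> \<not> snd x (fst x)})"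
  have RC: "measure (round_pmf n p) (C \<omega>) = real (n - k) / n * (1-p)^(k+1)" if w: "win n p k \<omega>" for \<omega>
  proof -
    define E where "E = (\<lambda>i. fst (\<omega> !! i)) ` {..<k}"
    define Q where "Q = (\<lambda>a. if a \<in> E then {} else {f. \<forall>i\<in>insert a E. \<not> f i})"
    have Esub: "E \<subseteq> {..<n}" unfolding E_def using w n set_round(1)[of _ n p] unfolding win_def by blast
    have inj: "inj_on (\<lambda>i. fst (\<omega> !! i)) {..<k}" using w unfolding win_def inj_on_def by auto
    have cE: "card E = k" unfolding E_def using card_image[OF inj] by simp
    have "C \<omega> = {x. snd x \<in> Q (fst x)} \<inter> set_pmf (round_pmf n p)"
      unfolding C_def Q_def E_def by auto
    then have "measure (round_pmf n p) (C \<omega>) = measure (round_pmf n p) {x. snd x \<in> Q (fst x)}"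
      by (simp add: measure_Int_set_pmf)
    also have "\<dots> = (\<Sum>a<n. measure (PiB n p) (Q a)) / n" using n by (rule round_prob)
    also have "(\<Sum>a<n. measure (PiB n p) (Q a)) = (\<Sum>a<n. if a \<in> E then 0 else (1-p)^(k+1))"
    proof (rule sum.cong)
      fix a assume "a \<in> {..<n}"
      then have "insert a E \<subseteq> {..<n}" using Esub by auto
      moreover have "a \<notin> E \<Longrightarrow> card (insert a E) = k + 1"
        using cE Esub finite_subset by (metis Suc_eq_plus1 card_insert_disjoint finite_lessThan)
      ultimately show "measure (PiB n p) (Q a) = (if a \<in> E then 0 else (1-p)^(k+1))"
        unfolding Q_def using Pi_surv[of p "insert a E" n] p by auto
    qed simp
    also have "\<dots> = (1-p)^(k+1) * real (card ({..<n} - E))" by (rule sum_if_card) simp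
    also have "card ({..<n} - E) = n - k" using Esub cE by (simp add: card_Diff_subset finite_subset)
    finally show ?thesis by simp
  qed
  have eq: "{\<omega>. win n p (Suc k) \<omega>} = {\<omega>. win n p k \<omega> \<and> \<omega> !! k \<in> C \<omega>}"
    unfolding C_def by (simp only: win_Suc)
  have predC: "Measurable.pred (stream_space (measure_pmf (round_pmf n p))) (\<lambda>\<omega>. \<omega> !! k \<in> C \<omega>)"
  proof -
    have "(\<lambda>\<omega>. \<omega> !! k \<in> C \<omega>) = (\<lambda>\<omega>. \<omega> !! k \<in> set_pmf (round_pmf n p) \<and> (\<forall>i<k. fst (\<omega> !! i) \<noteq> fst (\<omega> !! k)) \<and>
        (\<forall>i<k. \<not> snd (\<omega> !! k) (fst (\<omega> !! i))) \<and> \<not> snd (\<omega> !! k) (fst (\<omega> !! k)))"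
      unfolding C_def by (intro ext) (auto simp: image_iff, metis lessThan_iff)
    also have "Measurable.pred (stream_space (measure_pmf (round_pmf n p))) \<dots>"
      by (intro pred_intros_logic pred_intros_countable allI pred_snth measurable_const
         pred_snth2[where Q="\<lambda>x a. a \<noteq> fst x" and g=fst] pred_snth2[where Q="\<lambda>x a. snd x a" and g=fst])
    finally show ?thesis .
  qed
  have depC: "dep k C" unfolding dep_def C_def
  proof (intro allI impI)
    fix \<omega> \<omega>' :: "(nat \<times> (nat \<Rightarrow> bool)) stream" assume a: "\<forall>r<k. \<omega> !! r = \<omega>' !! r"
    then have "(\<lambda>i. fst (\<omega> !! i)) ` {..<k} = (\<lambda>i. fst (\<omega>' !! i)) ` {..<k}" by auto
    then show "{x \<in> set_pmf (round_pmf n p). fst x \<notin> (\<lambda>i. fst (\<omega> !! i)) ` {..<k} \<and>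
        (\<forall>i<k. \<not> snd x (fst (\<omega> !! i))) \<and> \<not> snd x (fst x)} =
      {x \<in> set_pmf (round_pmf n p). fst x \<notin> (\<lambda>i. fst (\<omega>' !! i)) ` {..<k} \<and>
        (\<forall>i<k. \<not> snd x (fst (\<omega>' !! i))) \<and> \<not> snd x (fst x)}" using a by auto
  qed
  have "measure (rounds_space n p) {\<omega>. win n p (Suc k) \<omega>} =
     (real (n - k) / n * (1-p)^(k+1)) * measure (rounds_space n p) {\<omega>. win n p k \<omega>}"
    unfolding eq rounds_space_def
    by (rule step_prob[OF dep_win depC RC pred_win predC]) (use p in auto)
  then show ?case using Suc by (simp add: pix_def)
qed



lemma win_in:
  "k \<le> n \<Longrightarrow> win n p k (sdrop u \<omega>) \<Longrightarrow> i < k \<Longrightarrow> fst (\<omega> !! (u+i)) \<in> coll_state (u+k) \<omega>"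
proof (induction k arbitrary: i)
  case 0 then show ?case by simp
next
  case (Suc k)
  have wk: "win n p k (sdrop u \<omega>)" using Suc.prems(2) by (rule win_mono[rotated]) simp
  have nl: "\<not> snd (\<omega> !! (u+k)) (fst (\<omega> !! (u+i)))"
    using Suc.prems(2,3) unfolding win_def sdrop_snth by (metis less_Suc_eq_le lessI)
  have "fst (\<omega> !! (u+i)) = fst (\<omega> !! (u+k)) \<or> fst (\<omega> !! (u+i)) \<in> coll_state (u+k) \<omega>"
  proof (cases "i = k")
    case False then have "i < k" using Suc.prems(3) by simp
    then show ?thesis using Suc.IH[OF _ wk] Suc.prems(1) by simp
  qed simp
  then show ?case using nl by (simp only: add_Suc_right mem_coll_Suc) blast
qed

lemma win_full:
  assumes n: "n > 0" and w: "win n p n (sdrop u \<omega>)"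
  shows "coll_state (u+n) \<omega> = {..<n}"
proof
  define I where "I = (\<lambda>i. fst (\<omega> !! (u+i))) ` {..<n}"
  have sup: "\<omega> !! (u+i) \<in> set_pmf (round_pmf n p)" if "i < n" for i
    using w that unfolding win_def sdrop_snth by auto
  have "I \<subseteq> {..<n}" unfolding I_def using sup set_round(1)[OF _ n, of _ p] by blast
  moreover have "card I = n"
  proof -
    have "inj_on (\<lambda>i. fst (\<omega> !! (u+i))) {..<n}"
      using w unfolding win_def sdrop_snth inj_on_def by auto
    then show ?thesis unfolding I_def by (simp add: card_image)
  qed
  ultimately have "I = {..<n}" by (intro card_subset_eq) auto
  moreover have "I \<subseteq> coll_state (u+n) \<omega>" unfolding I_def using win_in[OF le_refl w] by auto
  ultimately show "{..<n} \<subseteq> coll_state (u+n) \<omega>" by simp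
  show "coll_state (u+n) \<omega> \<subseteq> {..<n}"
  proof
    fix x assume x: "x \<in> coll_state (u+n) \<omega>"
    have "u + n = Suc (u + (n-1))" using n by simp
    then have "\<not> snd (\<omega> !! (u + (n-1))) x" using x by (metis mem_coll_Suc)
    moreover have "\<omega> !! (u + (n-1)) \<in> set_pmf (round_pmf n p)" using sup[of "n-1"] n by linarith
    ultimately show "x \<in> {..<n}" using set_round(2)[OF _ n] by (metis lessThan_iff not_le)
  qed
qed

definition Bw :: "nat \<Rightarrow> real \<Rightarrow> nat \<Rightarrow> (nat \<times> (nat \<Rightarrow> bool)) stream \<Rightarrow> bool" where
  "Bw n p u \<omega> \<longleftrightarrow> win n p n (sdrop u \<omega>) \<and> snd (\<omega> !! (u+n)) (fst (\<omega> !! (u+(n-1))))"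

lemma Bw_shift: "Bw n p u \<omega> = Bw n p 0 (sdrop u \<omega>)"
  unfolding Bw_def sdrop_snth by simp

lemma pred_Bw: "Measurable.pred (stream_space (measure_pmf R)) (Bw n p u)"
  unfolding Bw_def
  by (intro pred_intros_logic pred_sdrop[OF pred_win] pred_snth2[where Q="\<lambda>x a. snd x a" and g=fst])

lemma Bw_prob:
  assumes p: "0 < p" "p < 1" and n: "n > 0"
  shows "measure (rounds_space n p) {\<omega>. Bw n p u \<omega>} = p * pix n p n"
proof -
  have "measure (rounds_space n p) {\<omega>. Bw n p u \<omega>} = measure (rounds_space n p) {\<omega>. Bw n p 0 (sdrop u \<omega>)}"
    by (simp add: Bw_shift[of n p u])
  also have "\<dots> = measure (rounds_space n p) {\<omega>. Bw n p 0 \<omega>}"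
    unfolding rounds_space_def by (rule shift_inv[OF pred_Bw])
  also have "\<dots> = measure (rounds_space n p) {\<omega>. win n p n \<omega> \<and> \<omega> !! n \<in> (\<lambda>\<omega>. {x. snd x (fst (\<omega> !! (n-1)))}) \<omega>}"
    unfolding Bw_def by simp
  also have "\<dots> = p * measure (rounds_space n p) {\<omega>. win n p n \<omega>}"
    unfolding rounds_space_def
  proof (rule step_prob[OF dep_win])
    show "dep n (\<lambda>\<omega>. {x. snd x (fst (\<omega> !! (n-1)))})" unfolding dep_def using n by auto
    show "measure (measure_pmf (round_pmf n p)) {x. snd x (fst (\<omega> !! (n-1)))} = p" if "win n p n \<omega>" for \<omega>
    proof -
      have "\<omega> !! (n-1) \<in> set_pmf (round_pmf n p)" using that n unfolding win_def by auto
      then have a: "fst (\<omega> !! (n-1)) < n" using set_round(1)[OF _ n] by blast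
      have "measure (measure_pmf (round_pmf n p)) {x. snd x (fst (\<omega> !! (n-1)))} =
          measure (measure_pmf (round_pmf n p)) {x. snd x \<in> (\<lambda>_. {f. f (fst (\<omega> !! (n-1)))}) (fst x)}" by simp
      also have "\<dots> = (\<Sum>a<n. p) / n" using n Pi_lost[OF _ _ a, of p] p by (subst round_prob) simp_all
      finally show ?thesis using n by simp
    qed
    show "Measurable.pred (stream_space (measure_pmf (round_pmf n p))) (\<lambda>\<omega>. \<omega> !! n \<in> {x. snd x (fst (\<omega> !! (n-1)))})"
      using pred_snth2[where Q="\<lambda>x a. snd x a" and g=fst] by simp
  qed (use p pred_win in auto)
  finally show ?thesis using win_prob[OF p n le_refl] by simp
qed

lemma Bw_near:
  assumes "s < t" "t < s + n" "Bw n p s \<omega>" "Bw n p t \<omega>"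
  shows False
proof -
  have l: "snd (\<omega> !! (s+n)) (fst (\<omega> !! (s+(n-1))))" using assms(3) unfolding Bw_def by simp
  have w: "win n p n (sdrop t \<omega>)" using assms(4) unfolding Bw_def by simp
  define i where "i = s + (n-1) - t"
  define r where "r = s + n - t"
  have "i < n" "r < n" "i \<le> r" using assms(1,2) unfolding i_def r_def by auto
  then have "\<not> snd (\<omega> !! (t+r)) (fst (\<omega> !! (t+i)))" using w unfolding win_def sdrop_snth by blast
  moreover have "t + r = s + n" "t + i = s + (n-1)" using assms(1,2) unfolding i_def r_def by auto
  ultimately show False using l by simp
qed

lemma Bw_far:
  assumes p: "0 < p" "p < 1" and n: "n > 0" and st: "s + n \<le> t"
  shows "measure (rounds_space n p) {\<omega>. Bw n p s \<omega> \<and> Bw n p t \<omega>} \<le> pix n p n ^ 2"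
proof -
  interpret S: prob_space "rounds_space n p" unfolding rounds_space_def by (rule prob_space_SP)
  have eqs: "sdrop t \<omega> = sdrop (t - s - n) (sdrop (s+n) \<omega>)" for \<omega> :: "(nat \<times> (nat \<Rightarrow> bool)) stream"
    using st by simp
  have "measure (rounds_space n p) {\<omega>. Bw n p s \<omega> \<and> Bw n p t \<omega>} \<le>
      measure (rounds_space n p) {\<omega>. win n p n (sdrop s \<omega>) \<and> win n p n (sdrop (t - s - n) (sdrop (s+n) \<omega>))}"
  proof (rule S.finite_measure_mono)
    show "{\<omega>. Bw n p s \<omega> \<and> Bw n p t \<omega>} \<subseteq> {\<omega>. win n p n (sdrop s \<omega>) \<and> win n p n (sdrop (t - s - n) (sdrop (s+n) \<omega>))}"
      unfolding Bw_def using eqs by auto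
    show "{\<omega>. win n p n (sdrop s \<omega>) \<and> win n p n (sdrop (t - s - n) (sdrop (s+n) \<omega>))} \<in> sets (rounds_space n p)"
      unfolding rounds_space_def
      by (intro pred_sets pred_intros_logic pred_sdrop[OF pred_win] pred_sdrop[OF pred_sdrop[OF pred_win]])
  qed
  also have "\<dots> = measure (rounds_space n p) {\<omega>. win n p n (sdrop (t - s - n) \<omega>)} * measure (rounds_space n p) {\<omega>. win n p n (sdrop s \<omega>)}"
    unfolding rounds_space_def
  proof (rule split_indep)
    show "dep (s + n) (\<lambda>\<omega>. win n p n (sdrop s \<omega>))" unfolding dep_def using win_agree by blast
  qed (intro pred_sdrop[OF pred_win])+
  also have "\<dots> = pix n p n * pix n p n"
    using win_prob[OF p n le_refl] shift_inv[OF pred_win] unfolding rounds_space_def by simp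
  finally show ?thesis by (simp add: power2_eq_square)
qed



lemma pix_pos: "0 < p \<Longrightarrow> p < 1 \<Longrightarrow> k \<le> n \<Longrightarrow> 0 < pix n p k"
  unfolding pix_def by (intro prod_pos) auto

lemma pix_le: assumes "0 < p" "p < 1" "n > 0" shows "real n * pix n p n \<le> 1"
proof -
  obtain m where m: "n = Suc m" using assms(3) by (cases n) auto
  have f: "0 \<le> real (n - j) / n * (1-p)^(j+1) \<and> real (n - j) / n * (1-p)^(j+1) \<le> 1" if "j < n" for j
  proof -
    have "real (n - j) / n \<le> 1" using that by auto
    moreover have "(1-p)^(j+1) \<le> 1" using assms by (intro power_le_one) auto
    moreover have "0 \<le> (1-p)^(j+1)" using assms by simp
    ultimately show ?thesis by (intro conjI mult_nonneg_nonneg mult_le_one) auto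
  qed
  have "pix n p n = (\<Prod>j<m. real (n - j) / n * (1-p)^(j+1)) * (real (n - m) / n * (1-p)^(m+1))"
    unfolding pix_def m by simp
  also have "\<dots> \<le> 1 * (1 / n)"
  proof (rule mult_mono)
    show "(\<Prod>j<m. real (n - j) / n * (1-p)^(j+1)) \<le> 1" using f m by (intro prod_le_1) auto
    have "(1-p)^(m+1) \<le> 1" using assms by (intro power_le_one) auto
    moreover have "real (n - m) = 1" using m by simp
    ultimately show "real (n - m) / n * (1-p)^(m+1) \<le> 1 / n"
      by (simp add: divide_right_mono)
    show "0 \<le> real (n - m) / n * (1-p)^(m+1)" using assms by simp
  qed (use f m in auto)
  finally show ?thesis using assms by (simp add: field_simps)
qed

definition G :: "nat \<Rightarrow> real \<Rightarrow> nat \<Rightarrow> (nat \<times> (nat \<Rightarrow> bool)) stream \<Rightarrow> bool" where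
  "G n p m \<omega> \<longleftrightarrow> (\<exists>t<m. Bw n p t \<omega>)"

lemma pred_G: "Measurable.pred (stream_space (measure_pmf R)) (G n p m)"
  unfolding G_def by (intro pred_intros_countable pred_intros_logic pred_Bw measurable_const) simp_all

lemma dep_G: "dep (m + n) (G n p m)"
  unfolding dep_def
proof (intro allI impI)
  fix \<omega> \<omega>' :: "(nat \<times> (nat \<Rightarrow> bool)) stream" assume a: "\<forall>r<m + n. \<omega> !! r = \<omega>' !! r"
  have "Bw n p t \<omega> = Bw n p t \<omega>'" if "t < m" for t
  proof -
    have "win n p n (sdrop t \<omega>) = win n p n (sdrop t \<omega>')" using a that by (intro win_agree) auto
    moreover have "\<omega> !! (t+n) = \<omega>' !! (t+n)" "\<omega> !! (t+(n-1)) = \<omega>' !! (t+(n-1))" using a that by auto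
    ultimately show ?thesis unfolding Bw_def by simp
  qed
  then show "G n p m \<omega> = G n p m \<omega>'" unfolding G_def by auto
qed

lemma G_prob_general:
  assumes p: "0 < p" "p < 1" and n: "n > 0"
  shows "measure (rounds_space n p) {\<omega>. G n p m \<omega>} \<ge> m * pix n p n * p - (m * pix n p n)^2"
proof -
  interpret S: prob_space "rounds_space n p" unfolding rounds_space_def by (rule prob_space_SP)
  let ?A = "\<lambda>t. {\<omega>. Bw n p t \<omega>}"
  let ?\<pi> = "pix n p n"
  have As: "?A t \<in> sets (rounds_space n p)" for t unfolding rounds_space_def by (intro pred_sets pred_Bw)
  have eqG: "{\<omega>. G n p m \<omega>} = (\<Union>t<m. ?A t)" unfolding G_def by auto
  have pair: "measure (rounds_space n p) (?A s \<inter> ?A t) \<le> ?\<pi>^2" if "s < t" for s t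
  proof (cases "t < s + n")
    case True
    then have "?A s \<inter> ?A t = {}" using Bw_near[OF that True] by auto
    then show ?thesis by simp
  next
    case False
    have "?A s \<inter> ?A t = {\<omega>. Bw n p s \<omega> \<and> Bw n p t \<omega>}" by auto
    then show ?thesis using Bw_far[OF p n, of s t] False by simp
  qed
  have "measure (rounds_space n p) {\<omega>. G n p m \<omega>} \<ge>
      (\<Sum>i<m. measure (rounds_space n p) (?A i)) - (\<Sum>i<m. \<Sum>j<i. measure (rounds_space n p) (?A j \<inter> ?A i))"
    unfolding eqG by (rule S.bonf[OF As])
  moreover have "(\<Sum>i<m. measure (rounds_space n p) (?A i)) = m * (p * ?\<pi>)"
    using Bw_prob[OF p n] by simp
  moreover have "(\<Sum>i<m. \<Sum>j<i. measure (rounds_space n p) (?A j \<inter> ?A i)) \<le> (\<Sum>i<m. m * ?\<pi>^2)"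
  proof (rule sum_mono)
    fix i assume i: "i \<in> {..<m}"
    have "(\<Sum>j<i. measure (rounds_space n p) (?A j \<inter> ?A i)) \<le> (\<Sum>j<i. ?\<pi>^2)"
      using pair by (intro sum_mono) auto
    also have "\<dots> = i * ?\<pi>^2" by simp
    also have "\<dots> \<le> m * ?\<pi>^2" using i by (intro mult_right_mono) auto
    finally show "(\<Sum>j<i. measure (rounds_space n p) (?A j \<inter> ?A i)) \<le> m * ?\<pi>^2" .
  qed
  ultimately show ?thesis by (simp add: power2_eq_square algebra_simps)
qed

definition mm :: "nat \<Rightarrow> real \<Rightarrow> nat" where
  "mm n p = (if 1 \<le> p / (2 * pix n p n) then nat \<lfloor>p / (2 * pix n p n)\<rfloor> else 1)"

lemma mm_props:
  assumes p: "0 < p" "p < 1" and n: "n > 0"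
  shows "measure (rounds_space n p) {\<omega>. G n p (mm n p) \<omega>} \<ge> p^2 / 8"
    "real (mm n p + n) * pix n p n \<le> 2"
proof -
  let ?\<pi> = "pix n p n"
  have pi0: "0 < ?\<pi>" using pix_pos[OF p] by simp
  have pi1: "real n * ?\<pi> \<le> 1" using pix_le[OF p n] .
  have "1 * ?\<pi> \<le> real n * ?\<pi>" using n pi0 by (intro mult_right_mono) auto
  then have pi1': "?\<pi> \<le> 1" using pi1 by linarith
  define y where "y = p / (2 * ?\<pi>)"
  have "measure (rounds_space n p) {\<omega>. G n p (mm n p) \<omega>} \<ge> p^2 / 8 \<and> real (mm n p) * ?\<pi> \<le> 1"
  proof (cases "1 \<le> y")
    case True
    then have mm: "mm n p = nat \<lfloor>y\<rfloor>" unfolding mm_def y_def by simp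
    have m1: "real (mm n p) \<le> y" using True mm by linarith
    have m2: "real (mm n p) \<ge> y / 2"
    proof (cases "y < 2")
      case True
      then have "\<lfloor>y\<rfloor> = 1" using \<open>1 \<le> y\<close> by (intro floor_unique) auto
      then show ?thesis using mm True by simp
    next
      case False then show ?thesis using mm by linarith
    qed
    define x where "x = real (mm n p) * ?\<pi>"
    have x1: "x \<le> p / 2" using m1 pi0 unfolding x_def y_def by (simp add: field_simps)
    have x2: "x \<ge> p / 4" using m2 pi0 unfolding x_def y_def by (simp add: field_simps)
    have "x * (p - x) \<ge> (p/4) * (p/2)" using x1 x2 p by (intro mult_mono) auto
    then have "x * p - x^2 \<ge> p^2 / 8" by (simp add: power2_eq_square algebra_simps)
    moreover have "x \<le> 1" using x1 p by simp
    ultimately show ?thesis using G_prob_general[OF p n, of "mm n p"] unfolding x_def by simp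
  next
    case False
    then have mm: "mm n p = 1" unfolding mm_def y_def by simp
    have "{\<omega>. G n p 1 \<omega>} = {\<omega>. Bw n p 0 \<omega>}" unfolding G_def by auto
    then have "measure (rounds_space n p) {\<omega>. G n p (mm n p) \<omega>} = p * ?\<pi>" using mm Bw_prob[OF p n] by simp
    moreover have "?\<pi> > p / 2" using False pi0 unfolding y_def by (simp add: field_simps)
    moreover have "p * (p/2) \<le> p * ?\<pi>" using p \<open>?\<pi> > p / 2\<close> by (intro mult_left_mono) auto
    ultimately show ?thesis using p mm pi1' by (simp add: power2_eq_square)
  qed
  then show "measure (rounds_space n p) {\<omega>. G n p (mm n p) \<omega>} \<ge> p^2 / 8"
    "real (mm n p + n) * ?\<pi> \<le> 2" using pi1 by (simp_all add: distrib_right)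
qed



lemma prod_rev_real: "(\<Prod>j<n. real (n - j)) = fact n"
  using fact_prod_rev[of n, where 'a=real] by (simp add: atLeast0LessThan)

lemma prod_Suc_real: "(\<Prod>j<n. real (j + 1)) = fact n"
  using fact_prod_Suc[of n, where 'a=real] by (simp add: atLeast0LessThan)

lemma pix_closed: "pix n p n = fact n / real n ^ n * (1-p) ^ (\<Sum>j<n. j+1)"
proof -
  have "pix n p n = (\<Prod>j<n. real (n - j) / n) * (\<Prod>j<n. (1-p)^(j+1))"
    unfolding pix_def by (rule prod.distrib)
  also have "(\<Prod>j<n. real (n - j) / n) = (\<Prod>j<n. real (n - j)) / real n ^ n"
    by (simp add: prod_dividef)
  also have "(\<Prod>j<n. (1-p)^(j+1)) = (1-p) ^ (\<Sum>j<n. j+1)" by (simp add: power_sum)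
  finally show ?thesis by (simp only: prod_rev_real)
qed

lemma gauss_real: "real (\<Sum>j<n. j+1) = real n * (real n + 1) / 2"
  by (induction n) (simp_all add: field_simps)

lemma ln_pix:
  assumes "0 < p" "p < 1" "n > 0"
  shows "- ln (pix n p n) = real n * (real n + 1) / 2 * ln (1 / (1 - p)) + ln (real n ^ n / fact n)"
proof -
  have q: "0 < 1 - p" using assms by simp
  have "ln (pix n p n) = ln (fact n / real n ^ n) + ln ((1-p) ^ (\<Sum>j<n. j+1))"
    unfolding pix_closed using q assms by (subst ln_mult) auto
  also have "ln ((1-p) ^ (\<Sum>j<n. j+1)) = real (\<Sum>j<n. j+1) * ln (1-p)" by (rule ln_realpow)
  also have "ln (fact n / real n ^ n) = ln (fact n) - ln (real n ^ n)"
    using assms by (subst ln_div) auto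
  also have "ln (real n ^ n / fact n) = ln (real n ^ n) - ln (fact n)"
    using assms by (subst ln_div) auto
  moreover have "ln (1 / (1 - p)) = - ln (1 - p)" using q by (simp add: ln_div)
  ultimately show ?thesis unfolding gauss_real by (simp add: field_simps)
qed

lemma bb_le:
  assumes p: "0 < p" "p < 1" and n: "n > 0"
  shows "bb n p n \<le> pix n p n * exp ((1-p) / p^2)"
proof -
  let ?q = "1 - p"
  have q1: "?q ^ (j+1) \<le> ?q" for j using p by (simp add: power_le_one mult_left_le)
  have q0: "0 \<le> ?q ^ (j+1)" for j using p by simp
  have "bb n p n = (\<Prod>j<n. (real (j+1) / n * ?q^(j+1)) * (1 / (1 - ?q^(j+1))))"
    unfolding bb_def by (intro prod.cong) auto
  also have "\<dots> = (\<Prod>j<n. real (j+1) / n * ?q^(j+1)) * (\<Prod>j<n. 1 / (1 - ?q^(j+1)))"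
    by (rule prod.distrib)
  also have "(\<Prod>j<n. real (j+1) / n * ?q^(j+1)) = pix n p n"
  proof -
    have "(\<Prod>j<n. real (j+1) / n * ?q^(j+1)) = (\<Prod>j<n. real (j+1) / n) * (\<Prod>j<n. ?q^(j+1))"
      by (rule prod.distrib)
    also have "(\<Prod>j<n. real (j+1) / n) = (\<Prod>j<n. real (j+1)) / real n ^ n"
      by (simp add: prod_dividef)
    also have "(\<Prod>j<n. ?q^(j+1)) = ?q ^ (\<Sum>j<n. j+1)" by (simp add: power_sum)
    finally show ?thesis unfolding pix_closed prod_Suc_real by simp
  qed
  also have "(\<Prod>j<n. 1 / (1 - ?q^(j+1))) \<le> (\<Prod>j<n. exp (?q^(j+1) / p))"
  proof (rule prod_mono)
    fix j assume "j \<in> {..<n}"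
    have d: "1 - ?q^(j+1) \<ge> p" using q1[of j] by simp
    have "1 / (1 - ?q^(j+1)) = 1 + ?q^(j+1) / (1 - ?q^(j+1))" using d p by (simp add: field_simps)
    also have "\<dots> \<le> 1 + ?q^(j+1) / p"
    proof -
      have "0 \<le> ?q^(j+1)" using q0 .
      then show ?thesis using d p by (intro add_left_mono divide_left_mono) auto
    qed
    also have "\<dots> \<le> exp (?q^(j+1) / p)" by (rule exp_ge_add_one_self)
    finally show "0 \<le> 1 / (1 - ?q^(j+1)) \<and> 1 / (1 - ?q^(j+1)) \<le> exp (?q^(j+1) / p)"
      using d p by simp
  qed
  also have "(\<Prod>j<n. exp (?q^(j+1) / p)) = exp (\<Sum>j<n. ?q^(j+1) / p)" by (simp add: exp_sum)
  also have "(\<Sum>j<n. ?q^(j+1) / p) \<le> ?q / p^2"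
  proof -
    have s1: "(\<Sum>j<n. ?q^(j+1) / p) = ?q / p * (\<Sum>j<n. ?q^j)" by (simp add: sum_distrib_left)
    have "(\<Sum>j<n. ?q^j) = (1 - ?q^n) / (1 - ?q)" using p by (subst sum_gp_strict) auto
    also have "\<dots> \<le> 1 / p" using p by (simp add: divide_right_mono)
    finally have s2: "(\<Sum>j<n. ?q^j) \<le> 1 / p" .
    have "?q / p * (\<Sum>j<n. ?q^j) \<le> ?q / p * (1 / p)" using s2 p by (intro mult_left_mono) auto
    then show ?thesis using s1 by (simp add: power2_eq_square)
  qed
  then have "exp (\<Sum>j<n. ?q^(j+1) / p) \<le> exp (?q / p^2)" by simp
  finally show ?thesis using pix_pos[OF p, of n n] by (simp add: mult_left_mono)
qed



lemma block_indep:
  fixes L :: nat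
  assumes L: "L = m + n"
  shows "measure (rounds_space n p) {\<omega>. \<forall>j<K. \<not> G n p m (sdrop (j*L) \<omega>)}
     = (1 - measure (rounds_space n p) {\<omega>. G n p m \<omega>}) ^ K"
proof (induction K)
  case 0 then show ?case by (simp add: prob_UNIV)
next
  interpret S: prob_space "rounds_space n p" unfolding rounds_space_def by (rule prob_space_SP)
  case (Suc K)
  let ?\<Psi> = "\<lambda>\<omega>. \<forall>j<K. \<not> G n p m (sdrop (j*L) \<omega>)"
  have eq: "{\<omega>. \<forall>j<Suc K. \<not> G n p m (sdrop (j*L) \<omega>)} = {\<omega>. \<not> G n p m \<omega> \<and> ?\<Psi> (sdrop L \<omega>)}"
  proof -
    have a: "(\<forall>j<Suc K. Q j) = (Q 0 \<and> (\<forall>j<K. Q (Suc j)))" for Q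
      by (auto simp: less_Suc_eq_0_disj)
    have "(\<forall>j<Suc K. \<not> G n p m (sdrop (j*L) \<omega>)) \<longleftrightarrow> \<not> G n p m \<omega> \<and> ?\<Psi> (sdrop L \<omega>)" for \<omega>
      unfolding a by simp
    then show ?thesis by auto
  qed
  have predPsi: "Measurable.pred (stream_space (measure_pmf (round_pmf n p))) ?\<Psi>"
    by (intro pred_intros_countable pred_intros_logic pred_sdrop[OF pred_G] measurable_const) simp_all
  have depnG: "dep L (\<lambda>\<omega>. \<not> G n p m \<omega>)" using dep_G[of m n] L unfolding dep_def by auto
  have "measure (rounds_space n p) {\<omega>. \<not> G n p m \<omega> \<and> ?\<Psi> (sdrop L \<omega>)}
      = measure (rounds_space n p) {\<omega>. ?\<Psi> \<omega>} * measure (rounds_space n p) {\<omega>. \<not> G n p m \<omega>}"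
    unfolding rounds_space_def
    by (rule split_indep[OF depnG _ predPsi]) (intro pred_intros_logic pred_G)
  moreover have "measure (rounds_space n p) {\<omega>. \<not> G n p m \<omega>} = 1 - measure (rounds_space n p) {\<omega>. G n p m \<omega>}"
  proof -
    have "{\<omega>. \<not> G n p m \<omega>} = space (rounds_space n p) - {\<omega>. G n p m \<omega>}"
      by (auto simp: rounds_space_def)
    moreover have "{\<omega>. G n p m \<omega>} \<in> sets (rounds_space n p)" unfolding rounds_space_def by (intro pred_sets pred_G)
    ultimately show ?thesis using S.prob_compl by simp
  qed
  ultimately show ?case using eq Suc.IH by simp
qed

lemma hit:
  assumes n: "n > 0" and g: "G n p m (sdrop (j*(m+n)) \<omega>)"
  shows "\<exists>s \<le> Suc j * (m+n). coll_state s \<omega> = {..<n}"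
proof -
  obtain t where t: "t < m" "Bw n p t (sdrop (j*(m+n)) \<omega>)" using g unfolding G_def by auto
  then have "win n p n (sdrop (j*(m+n) + t) \<omega>)" unfolding Bw_def by (simp add: add.commute)
  then have "coll_state (j*(m+n) + t + n) \<omega> = {..<n}" by (rule win_full[OF n])
  moreover have "j*(m+n) + t + n \<le> Suc j * (m+n)" using t by simp
  ultimately show ?thesis by blast
qed

lemma ct_attained:
  assumes "coll_state s \<omega> = {..<n}"
  shows "\<exists>t \<le> s. completion_time n \<omega> = enat t \<and> coll_state t \<omega> = {..<n}"
proof -
  define t where "t = (LEAST t. coll_state t \<omega> = {..<n})"
  have t1: "coll_state t \<omega> = {..<n}" unfolding t_def by (rule LeastI[of _ s]) (rule assms)
  have t2: "t \<le> s" unfolding t_def by (rule Least_le) (rule assms)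
  have "completion_time n \<omega> = enat t"
    unfolding completion_time_def
  proof (rule antisym)
    show "(INF t \<in> {t. coll_state t \<omega> = {..<n}}. enat t) \<le> enat t" using t1 by (intro INF_lower) auto
    show "enat t \<le> (INF t \<in> {t. coll_state t \<omega> = {..<n}}. enat t)"
      by (rule INF_greatest) (auto simp: t_def intro: Least_le)
  qed
  then show ?thesis using t1 t2 by blast
qed



theorem mainTheorem19:
  fixes p :: real
  assumes "0 < p" and "p < 1"
  shows "\<forall>\<epsilon>>0. \<exists>M::real. \<forall>n\<ge>1.
    measure (rounds_space n p)
      {\<omega> \<in> space (rounds_space n p).
         \<not> (completion_time n \<omega> < \<infinity> \<and>
            \<bar>ln (real (the_enat (completion_time n \<omega>)))
              - (real n * (real n + 1) / 2 * ln (1 / (1 - p)) + ln (real n ^ n / fact n))\<bar> \<le> M)}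
    \<le> \<epsilon>"
proof (intro allI impI)
  have p: "0 < p" "p < 1" using assms by auto
  fix \<epsilon> :: real assume \<epsilon>: "\<epsilon> > 0"
  define c where "c = p^2 / 8"
  have pp: "p^2 < 1" using p by (simp add: power_less_one_iff)
  have c0: "0 < c" "c < 1" unfolding c_def using p pp by auto
  obtain K0 where K0: "(1 - c) ^ K0 < \<epsilon> / 2" using real_arch_pow_inv[of "\<epsilon>/2" "1 - c"] \<epsilon> c0 by auto
  define K where "K = Suc K0"
  have K: "(1 - c) ^ K \<le> \<epsilon> / 2"
  proof -
    have "(1 - c) ^ K \<le> (1 - c) ^ K0" unfolding K_def using c0 by (intro power_decreasing) auto
    then show ?thesis using K0 by simp
  qed
  have K1: "K \<ge> 1" unfolding K_def by simp
  define D where "D = exp ((1-p) / p^2)"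
  have D0: "D > 0" unfolding D_def by simp
  define M where "M = max (ln (2 * real K)) (ln (2 * D / \<epsilon>))"
  show "\<exists>M::real. \<forall>n\<ge>1.
    measure (rounds_space n p)
      {\<omega> \<in> space (rounds_space n p).
         \<not> (completion_time n \<omega> < \<infinity> \<and>
            \<bar>ln (real (the_enat (completion_time n \<omega>)))
              - (real n * (real n + 1) / 2 * ln (1 / (1 - p)) + ln (real n ^ n / fact n))\<bar> \<le> M)}
    \<le> \<epsilon>"
  proof (intro exI[of _ M] allI impI)
    fix n :: nat assume "n \<ge> 1"
    then have n: "n > 0" by simp
    interpret S: prob_space "rounds_space n p" unfolding rounds_space_def by (rule prob_space_SP)
    define \<pi> where "\<pi> = pix n p n"
    have \<pi>0: "\<pi> > 0" unfolding \<pi>_def using pix_pos[OF p] by simp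
    define a where "a = real n * (real n + 1) / 2 * ln (1 / (1 - p)) + ln (real n ^ n / fact n)"
    have a: "a = - ln \<pi>" unfolding a_def \<pi>_def using ln_pix[OF p n] by simp
    define L where "L = mm n p + n"
    have L\<pi>: "real L * \<pi> \<le> 2" unfolding L_def \<pi>_def using mm_props(2)[OF p n] .
    define K1 where "K1 = nat \<lfloor>exp (- M) / \<pi>\<rfloor>"
    have K1a: "real K1 \<le> exp (- M) / \<pi>" unfolding K1_def using \<pi>0
      by (simp add: of_nat_floor)
    have K1b: "real K1 + 1 > exp (- M) / \<pi>"
    proof -
      have x0: "0 \<le> exp (- M) / \<pi>" using \<pi>0 by simp
      then have "real K1 = real_of_int \<lfloor>exp (- M) / \<pi>\<rfloor>" unfolding K1_def by simp
      moreover have "exp (- M) / \<pi> < real_of_int \<lfloor>exp (- M) / \<pi>\<rfloor> + 1" by linarith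
      ultimately show ?thesis by simp
    qed
    define Low where "Low = (\<Union>s\<in>{1..K1}. {\<omega>. {..<n} \<subseteq> coll_state s \<omega>})"
    define High where "High = {\<omega>. \<forall>j<K. \<not> G n p (mm n p) (sdrop (j*L) \<omega>)}"
    let ?bad = "{\<omega> \<in> space (rounds_space n p).
         \<not> (completion_time n \<omega> < \<infinity> \<and>
            \<bar>ln (real (the_enat (completion_time n \<omega>))) - a\<bar> \<le> M)}"
    have Ls: "\<And>s. {\<omega>. {..<n} \<subseteq> coll_state s \<omega>} \<in> sets (rounds_space n p)"
      unfolding rounds_space_def by (intro pred_sets pred_coll_sub) simp
    have LowS: "Low \<in> sets (rounds_space n p)" unfolding Low_def rounds_space_def
      by (intro sets.finite_UN pred_sets pred_coll_sub) auto
    have HighS: "High \<in> sets (rounds_space n p)" unfolding High_def rounds_space_def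
      by (intro pred_sets pred_intros_countable pred_intros_logic pred_sdrop[OF pred_G] measurable_const) simp_all
    have sub: "?bad \<subseteq> Low \<union> High"
    proof
      fix \<omega> assume bad: "\<omega> \<in> ?bad"
      show "\<omega> \<in> Low \<union> High"
      proof (rule ccontr)
        assume nLH: "\<omega> \<notin> Low \<union> High"
        then have "\<omega> \<notin> High" by blast
        then obtain j where j: "j < K" "G n p (mm n p) (sdrop (j*L) \<omega>)" unfolding High_def by blast
        obtain s where s: "s \<le> Suc j * L" "coll_state s \<omega> = {..<n}"
          using hit[OF n j(2)[unfolded L_def]] unfolding L_def by blast
        obtain t where t: "t \<le> s" "completion_time n \<omega> = enat t" "coll_state t \<omega> = {..<n}"
          using ct_attained[OF s(2)] by blast
        have tK: "t \<le> K * L"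
        proof -
          have "Suc j * L \<le> K * L" using j(1) by (intro mult_right_mono) auto
          then show ?thesis using t(1) s(1) by linarith
        qed
        have t0: "t \<noteq> 0"
        proof
          assume "t = 0"
          then have "{} = {..<n}" using t(3) by simp
          then show False using n by (metis empty_iff lessThan_iff)
        qed
        have "t \<notin> {1..K1}"
        proof
          assume tin: "t \<in> {1..K1}"
          have "\<omega> \<in> Low" unfolding Low_def using t(3) tin by blast
          then show False using nLH by blast
        qed
        then have "\<not> (1 \<le> t \<and> t \<le> K1)" by simp
        then have tK1: "t \<ge> K1 + 1" using t0 by linarith
        then have "real t > exp (- M) / \<pi>" using K1b by linarith
        then have "ln (real t) > ln (exp (- M) / \<pi>)" using \<pi>0 t0 by (intro ln_less_cancel_iff[THEN iffD2]) auto
        moreover have "ln (exp (- M) / \<pi>) = - M - ln \<pi>" using \<pi>0 by (simp add: ln_div)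
        ultimately have lo: "ln (real t) - a \<ge> - M" using a by simp
        have "real t * \<pi> \<le> real K * (real L * \<pi>)"
          using tK \<pi>0 by (simp add: mult_right_mono flip: of_nat_mult)
        also have "\<dots> \<le> real K * 2" using L\<pi> by (intro mult_left_mono) auto
        finally have "real t \<le> 2 * real K / \<pi>" using \<pi>0 by (simp add: field_simps)
        then have "ln (real t) \<le> ln (2 * real K / \<pi>)" using t0 by (intro ln_le_cancel_iff[THEN iffD2]) auto
        moreover have "ln (2 * real K / \<pi>) = ln (2 * real K) - ln \<pi>" using \<pi>0 K1 by (simp add: ln_div)
        ultimately have hi: "ln (real t) - a \<le> M" using a unfolding M_def by simp
        have "completion_time n \<omega> < \<infinity> \<and> \<bar>ln (real (the_enat (completion_time n \<omega>))) - a\<bar> \<le> M"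
          using t(2) lo hi by simp
        then show False using bad by simp
      qed
    qed
    have "measure (rounds_space n p) ?bad \<le> measure (rounds_space n p) (Low \<union> High)"
      using sub LowS HighS by (intro S.finite_measure_mono) auto
    also have "\<dots> \<le> measure (rounds_space n p) Low + measure (rounds_space n p) High"
      using LowS HighS by (intro measure_subadditive S.emeasure_finite) auto
    also have "measure (rounds_space n p) Low \<le> \<epsilon> / 2"
    proof -
      have "measure (rounds_space n p) Low \<le> (\<Sum>s\<in>{1..K1}. measure (rounds_space n p) {\<omega>. {..<n} \<subseteq> coll_state s \<omega>})"
        unfolding Low_def using Ls by (intro S.finite_measure_subadditive_finite) auto
      also have "\<dots> \<le> (\<Sum>s\<in>{1..K1}. bb n p n)"
        using lower_main[OF p n] by (intro sum_mono) (metis card_lessThan order_refl)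
      also have "\<dots> = real K1 * bb n p n" by simp
      also have "\<dots> \<le> (exp (- M) / \<pi>) * (\<pi> * D)"
        using K1a bb_le[OF p n] bb_nonneg[OF p, of n n] unfolding \<pi>_def D_def
        by (intro mult_mono) auto
      also have "\<dots> = exp (- M) * D" using \<pi>0 by simp
      also have "\<dots> \<le> \<epsilon> / 2"
      proof -
        have "ln (2 * D / \<epsilon>) \<le> M" unfolding M_def by simp
        then have "exp (- M) \<le> exp (- ln (2 * D / \<epsilon>))" by simp
        also have "\<dots> = \<epsilon> / (2 * D)" using D0 \<epsilon> by (simp add: exp_minus)
        finally show ?thesis using D0 by (simp add: field_simps)
      qed
      finally show ?thesis .
    qed
    also have "measure (rounds_space n p) High \<le> \<epsilon> / 2"
    proof -
      have "measure (rounds_space n p) High = (1 - measure (rounds_space n p) {\<omega>. G n p (mm n p) \<omega>}) ^ K"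
        unfolding High_def by (rule block_indep) (simp add: L_def)
      also have "\<dots> \<le> (1 - c) ^ K"
        using mm_props(1)[OF p n] S.prob_le_1 unfolding c_def by (intro power_mono) auto
      finally show ?thesis using K by simp
    qed
    finally show "measure (rounds_space n p)
      {\<omega> \<in> space (rounds_space n p).
         \<not> (completion_time n \<omega> < \<infinity> \<and>
            \<bar>ln (real (the_enat (completion_time n \<omega>)))
              - (real n * (real n + 1) / 2 * ln (1 / (1 - p)) + ln (real n ^ n / fact n))\<bar> \<le> M)} \<le> \<epsilon>"
      unfolding a_def by simp
  qed
qed


end
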